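(* Let $T:\mathcal{B}(\mathcal{H})\to\mathcal{B}(\mathcal{H})$ be a Markov operator and $p\in\mathcal{B}(\mathcal{H})$ an orthogonal projection. The following are equivalent: (i) $p$ is transient. (ii) There is a family of unit vectors $(\xi_j)_{j\in J}\subseteq\mathcal{H}$ such that $p\mathcal{H}$ is contained in the closed linear span of $\{\xi_j:j\in J\}$ and each rank one operator $t_{\xi_j}$ is $T$-summable. (iii) There is a family of unit vectors $(\xi_j)_{j\in J}\subseteq\mathcal{H}$ such that $p\mathcal{H}$ is contained in the closed linear span of $\{\xi_j:j\in J\}$ and $\sum_{n=0}^\infty\langle T^n(t_{\xi_j})\eta,\eta\rangle<\infty$ for all $j\in J$ and $\eta\in\mathcal{H}$.
   Context: A Markov operator is a normal completely positive unital linear map. For $\xi\in\mathcal{H}$, $t_\xi$ denotes $\eta\mapsto\langle\eta,\xi\rangle\xi$. A positive operator $x$ is $T$-summable if $\sum_{n\ge0}T^n(x)$ converges strongly to a bounded operator. An orthogonal projection $p$ is transient if $p\le\bigvee_{j\in J}p_j$ for some family of $T$-summable orthogonal projections $p_j$. *)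

theory Defs
  imports "HOL-Analysis.Analysis"
begin

text \<open>Complex inner product space: a real normed vector space with a compatible
complex scalar multiplication and a complex inner product, linear in the FIRST
argument and conjugate-linear in the second (so that t_xi eta = <eta,xi> xi is linear).\<close>

class complex_inner = real_normed_vector +
  fixes scaleC :: "complex \<Rightarrow> 'a \<Rightarrow> 'a"
    and cinner :: "'a \<Rightarrow> 'a \<Rightarrow> complex"
  assumes scaleC_add_right: "scaleC a (x + y) = scaleC a x + scaleC a y"
    and scaleC_add_left: "scaleC (a + b) x = scaleC a x + scaleC b x"
    and scaleC_scaleC: "scaleC a (scaleC b x) = scaleC (a * b) x"
    and scaleC_one: "scaleC 1 x = x"
    and scaleR_scaleC: "scaleR r x = scaleC (complex_of_real r) x"
    and cinner_add_left: "cinner (x + y) z = cinner x z + cinner y z"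
    and cinner_scaleC_left: "cinner (scaleC a x) y = a * cinner x y"
    and cinner_commute: "cinner x y = cnj (cinner y x)"
    and cinner_ge_zero: "0 \<le> Re (cinner x x)"
    and cinner_eq_zero_iff: "cinner x x = 0 \<longleftrightarrow> x = 0"
    and norm_eq_sqrt_cinner: "norm x = sqrt (Re (cinner x x))"

class chilbert_space = complex_inner + complete_space

definition bop :: "('a::complex_inner \<Rightarrow> 'a) \<Rightarrow> bool" where
  "bop A \<longleftrightarrow> (\<forall>x y. A (x + y) = A x + A y) \<and> (\<forall>c x. A (scaleC c x) = scaleC c (A x))
            \<and> (\<exists>K. \<forall>x. norm (A x) \<le> norm x * K)"

definition selfadj :: "('a::complex_inner \<Rightarrow> 'a) \<Rightarrow> bool" where
  "selfadj A \<longleftrightarrow> bop A \<and> (\<forall>x y. cinner (A x) y = cinner x (A y))"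

definition pos_op :: "('a::complex_inner \<Rightarrow> 'a) \<Rightarrow> bool" where
  "pos_op A \<longleftrightarrow> bop A \<and> (\<forall>x. Im (cinner (A x) x) = 0 \<and> 0 \<le> Re (cinner (A x) x))"

definition op_le :: "('a::complex_inner \<Rightarrow> 'a) \<Rightarrow> ('a \<Rightarrow> 'a) \<Rightarrow> bool" where
  "op_le A B \<longleftrightarrow> pos_op (\<lambda>x. B x - A x)"

definition orth_proj :: "('a::complex_inner \<Rightarrow> 'a) \<Rightarrow> bool" where
  "orth_proj p \<longleftrightarrow> selfadj p \<and> (\<forall>x. p (p x) = p x)"

definition proj_sup :: "('a::complex_inner \<Rightarrow> 'a) set \<Rightarrow> ('a \<Rightarrow> 'a) \<Rightarrow> bool" where
  "proj_sup P q \<longleftrightarrow> orth_proj q \<and> (\<forall>r\<in>P. op_le r q)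
      \<and> (\<forall>q'. orth_proj q' \<and> (\<forall>r\<in>P. op_le r q') \<longrightarrow> op_le q q')"

definition op_lub :: "('a::complex_inner \<Rightarrow> 'a) set \<Rightarrow> ('a \<Rightarrow> 'a) \<Rightarrow> bool" where
  "op_lub D A \<longleftrightarrow> selfadj A \<and> (\<forall>d\<in>D. op_le d A)
      \<and> (\<forall>B. selfadj B \<and> (\<forall>d\<in>D. op_le d B) \<longrightarrow> op_le A B)"

text \<open>Positivity of an n x n operator matrix (A i j), i.e. of the operator on H^n.\<close>
definition matrix_pos :: "nat \<Rightarrow> (nat \<Rightarrow> nat \<Rightarrow> 'a::complex_inner \<Rightarrow> 'a) \<Rightarrow> bool" where
  "matrix_pos n A \<longleftrightarrow> (\<forall>i<n. \<forall>j<n. bop (A i j)) \<and>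
     (\<forall>x :: nat \<Rightarrow> 'a. Im (\<Sum>i<n. \<Sum>j<n. cinner (A i j (x j)) (x i)) = 0
                      \<and> 0 \<le> Re (\<Sum>i<n. \<Sum>j<n. cinner (A i j (x j)) (x i)))"

definition completely_positive :: "(('a::complex_inner \<Rightarrow> 'a) \<Rightarrow> ('a \<Rightarrow> 'a)) \<Rightarrow> bool" where
  "completely_positive T \<longleftrightarrow> (\<forall>n A. matrix_pos n A \<longrightarrow> matrix_pos n (\<lambda>i j. T (A i j)))"

text \<open>Normality: preservation of suprema of bounded upward directed sets (nets) of
self-adjoint operators.\<close>
definition normal_map :: "(('a::complex_inner \<Rightarrow> 'a) \<Rightarrow> ('a \<Rightarrow> 'a)) \<Rightarrow> bool" where
  "normal_map T \<longleftrightarrow> (\<forall>D A. D \<noteq> {} \<and> (\<forall>d\<in>D. selfadj d)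
        \<and> (\<forall>a\<in>D. \<forall>b\<in>D. \<exists>c\<in>D. op_le a c \<and> op_le b c)
        \<and> op_lub D A \<longrightarrow> op_lub (T ` D) (T A))"

definition markov_operator :: "(('a::complex_inner \<Rightarrow> 'a) \<Rightarrow> ('a \<Rightarrow> 'a)) \<Rightarrow> bool" where
  "markov_operator T \<longleftrightarrow>
     (\<forall>A. bop A \<longrightarrow> bop (T A))
   \<and> (\<forall>A B. bop A \<and> bop B \<longrightarrow> T (\<lambda>x. A x + B x) = (\<lambda>x. T A x + T B x))
   \<and> (\<forall>c A. bop A \<longrightarrow> T (\<lambda>x. scaleC c (A x)) = (\<lambda>x. scaleC c (T A x)))
   \<and> completely_positive T \<and> T id = id \<and> normal_map T"

definition rank_one :: "'a::complex_inner \<Rightarrow> ('a \<Rightarrow> 'a)" where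
  "rank_one \<xi> = (\<lambda>\<eta>. scaleC (cinner \<eta> \<xi>) \<xi>)"

definition T_summable :: "(('a::complex_inner \<Rightarrow> 'a) \<Rightarrow> ('a \<Rightarrow> 'a)) \<Rightarrow> ('a \<Rightarrow> 'a) \<Rightarrow> bool" where
  "T_summable T x \<longleftrightarrow> pos_op x \<and>
     (\<exists>S. bop S \<and> (\<forall>\<eta>. ((\<lambda>N. \<Sum>n<N. (T ^^ n) x \<eta>) \<longlongrightarrow> S \<eta>) sequentially))"

definition transient :: "(('a::complex_inner \<Rightarrow> 'a) \<Rightarrow> ('a \<Rightarrow> 'a)) \<Rightarrow> ('a \<Rightarrow> 'a) \<Rightarrow> bool" where
  "transient T p \<longleftrightarrow> orth_proj p \<and>
     (\<exists>P q. (\<forall>r\<in>P. orth_proj r \<and> T_summable T r) \<and> proj_sup P q \<and> op_le p q)"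

definition cspan :: "'a::complex_inner set \<Rightarrow> 'a set" where
  "cspan X = {y. \<exists>F c. finite F \<and> F \<subseteq> X \<and> y = (\<Sum>x\<in>F. scaleC (c x) x)}"

definition closed_cspan :: "'a::complex_inner set \<Rightarrow> 'a set" where
  "closed_cspan X = closure (cspan X)"

end

theory Submission
  imports Defs
begin


lemma cinner_zero_left[simp]: "cinner 0 (y::'a::complex_inner) = 0"
proof -
  have "cinner (0+0) y = cinner 0 y + cinner 0 y" by (rule cinner_add_left)
  then show ?thesis by simp
qed

lemma cinner_add_right: "cinner (x::'a::complex_inner) (y + z) = cinner x y + cinner x z"
  by (metis cinner_commute cinner_add_left complex_cnj_add)

lemma cinner_zero_right[simp]: "cinner (x::'a::complex_inner) 0 = 0"
  by (metis cinner_commute cinner_zero_left complex_cnj_zero)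

lemma cinner_scaleC_right: "cinner (x::'a::complex_inner) (scaleC a y) = cnj a * cinner x y"
  by (metis cinner_commute cinner_scaleC_left complex_cnj_mult)

lemma scaleC_of_real: "scaleC (complex_of_real r) (x::'a::complex_inner) = scaleR r x"
  by (simp add: scaleR_scaleC)

lemma scaleC_minus1: "scaleC (-1) (x::'a::complex_inner) = - x"
  using scaleR_scaleC[of "-1" x] by simp

lemma scaleC_zero_left[simp]: "scaleC 0 (x::'a::complex_inner) = 0"
  using scaleR_scaleC[of 0 x] by simp

lemma scaleC_zero_right[simp]: "scaleC a (0::'a::complex_inner) = 0"
proof -
  have "scaleC a (0+0::'a) = scaleC a 0 + scaleC a 0" by (rule scaleC_add_right)
  then show ?thesis by simp
qed

lemma scaleC_minus_right: "scaleC a (- x::'a::complex_inner) = - scaleC a x"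
  by (metis scaleC_minus1 scaleC_scaleC mult.commute)

lemma scaleC_diff_right: "scaleC a (x - y::'a::complex_inner) = scaleC a x - scaleC a y"
  by (metis diff_conv_add_uminus scaleC_add_right scaleC_minus_right)

lemma scaleC_minus_left: "scaleC (- a) (x::'a::complex_inner) = - scaleC a x"
  by (metis scaleC_minus1 scaleC_scaleC mult_minus1)

lemma scaleC_diff_left: "scaleC (a - b) (x::'a::complex_inner) = scaleC a x - scaleC b x"
  by (metis diff_conv_add_uminus scaleC_add_left scaleC_minus_left)

lemma cinner_minus_left: "cinner (- x) (y::'a::complex_inner) = - cinner x y"
  by (metis cinner_scaleC_left scaleC_minus1 mult_minus1)

lemma cinner_minus_right: "cinner x (- y::'a::complex_inner) = - cinner x y"
  by (metis cinner_commute cinner_minus_left complex_cnj_minus)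

lemma cinner_diff_left: "cinner (x - y) (z::'a::complex_inner) = cinner x z - cinner y z"
  by (metis diff_conv_add_uminus cinner_add_left cinner_minus_left)

lemma cinner_diff_right: "cinner x (y - z::'a::complex_inner) = cinner x y - cinner x z"
  by (metis diff_conv_add_uminus cinner_add_right cinner_minus_right)

lemma cinner_self: "cinner (x::'a::complex_inner) x = complex_of_real ((norm x)^2)"
proof -
  have "Im (cinner x x) = 0" using cinner_commute[of x x]
  proof -
    have "Im (cinner x x) = Im (cnj (cinner x x))" using cinner_commute[of x x] by simp
    then show ?thesis by simp
  qed
  moreover have "Re (cinner x x) = (norm x)^2" using norm_eq_sqrt_cinner[of x] cinner_ge_zero[of x] by simp
  ultimately show ?thesis by (simp add: complex_eq_iff)
qed

lemma cinner_sum_left: "cinner (sum f F) (y::'a::complex_inner) = (\<Sum>i\<in>F. cinner (f i) y)"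
  by (induction F rule: infinite_finite_induct) (auto simp: cinner_add_left)

lemma cinner_sum_right: "cinner (y::'a::complex_inner) (sum f F) = (\<Sum>i\<in>F. cinner y (f i))"
  by (induction F rule: infinite_finite_induct) (auto simp: cinner_add_right)

lemma norm_scaleC: "norm (scaleC a (x::'a::complex_inner)) = cmod a * norm x"
proof -
  have "(norm (scaleC a x))^2 = (cmod a * norm x)^2"
  proof -
    have "complex_of_real ((norm (scaleC a x))^2) = cinner (scaleC a x) (scaleC a x)" by (simp add: cinner_self)
    also have "\<dots> = a * cnj a * cinner x x" by (simp add: cinner_scaleC_left cinner_scaleC_right)
    also have "\<dots> = complex_of_real ((cmod a * norm x)^2)"
      by (simp add: cinner_self complex_norm_square[symmetric] power_mult_distrib)
    finally show ?thesis using of_real_eq_iff by blast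
  qed
  then show ?thesis by (simp add: power2_eq_iff_nonneg)
qed

lemma cauchy_schwarz: "cmod (cinner (x::'a::complex_inner) y) \<le> norm x * norm y"
proof (cases "y = 0")
  case True then show ?thesis by simp
next
  case False
  define c where "c = cinner x y / cinner y y"
  have ny: "norm y > 0" using False by simp
  have yy: "cinner y y = complex_of_real ((norm y)^2)" by (rule cinner_self)
  have "0 \<le> (norm (x - scaleC c y))^2" by simp
  have "complex_of_real ((norm (x - scaleC c y))^2) = cinner (x - scaleC c y) (x - scaleC c y)"
    by (simp add: cinner_self)
  also have "\<dots> = cinner x x - cnj c * cinner x y - c * cinner y x + c * cnj c * cinner y y"
    by (simp add: cinner_diff_left cinner_diff_right cinner_scaleC_left cinner_scaleC_right algebra_simps)
  also have "\<dots> = cinner x x - cinner x y * cnj (cinner x y) / cinner y y"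
    using yy ny by (simp add: c_def cinner_commute[of y x] field_simps)
  also have "\<dots> = complex_of_real ((norm x)^2 - (cmod (cinner x y))^2 / (norm y)^2)"
    by (simp add: cinner_self yy complex_norm_square[symmetric])
  finally have "(norm (x - scaleC c y))^2 = (norm x)^2 - (cmod (cinner x y))^2 / (norm y)^2"
    using of_real_eq_iff by blast
  then have "(cmod (cinner x y))^2 / (norm y)^2 \<le> (norm x)^2"
    by (metis diff_ge_0_iff_ge zero_le_power2)
  then have "(cmod (cinner x y))^2 \<le> (norm x * norm y)^2" using ny
    by (simp add: divide_le_eq power_mult_distrib)
  then show ?thesis by (meson power2_le_imp_le mult_nonneg_nonneg norm_ge_zero)
qed




lemma cinner_scaleR_left: "cinner (scaleR r x) (y::'a::complex_inner) = complex_of_real r * cinner x y"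
  by (simp add: scaleR_scaleC cinner_scaleC_left)

lemma cinner_scaleR_right: "cinner x (scaleR r (y::'a::complex_inner)) = complex_of_real r * cinner x y"
  by (simp add: scaleR_scaleC cinner_scaleC_right)

lemma bounded_bilinear_cinner: "bounded_bilinear (cinner :: 'a::complex_inner \<Rightarrow> 'a \<Rightarrow> complex)"
proof
  fix a a' b b' :: 'a and r :: real
  show "cinner (a + a') b = cinner a b + cinner a' b" by (rule cinner_add_left)
  show "cinner b (a + a') = cinner b a + cinner b a'" by (rule cinner_add_right)
  show "cinner (r *\<^sub>R a) b = r *\<^sub>R cinner a b" by (simp add: cinner_scaleR_left scaleR_conv_of_real)
  show "cinner a (r *\<^sub>R b) = r *\<^sub>R cinner a b" by (simp add: cinner_scaleR_right scaleR_conv_of_real)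
  show "\<exists>K. \<forall>a b::'a. norm (cinner a b) \<le> norm a * norm b * K"
    by (rule exI[of _ 1]) (simp add: cauchy_schwarz)
qed

lemmas tendsto_cinner = bounded_bilinear.tendsto[OF bounded_bilinear_cinner]

lemma bopI: assumes "\<And>x y. A (x + y) = A x + A y" "\<And>c x. A (scaleC c x) = scaleC c (A x)"
   "\<And>x. norm (A x) \<le> norm x * K" shows "bop A"
  unfolding bop_def by (intro conjI allI exI[where x=K] assms)

lemma bop_add: "bop A \<Longrightarrow> A (x + y) = A x + A y" by (simp add: bop_def)
lemma bop_scaleC: "bop A \<Longrightarrow> A (scaleC c x) = scaleC c (A x)" by (simp add: bop_def)
lemma bop_scaleR: "bop A \<Longrightarrow> A (scaleR r x) = scaleR r (A x)" by (simp add: bop_def scaleR_scaleC)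
lemma bop_zero: "bop A \<Longrightarrow> A 0 = 0"
  using bop_scaleC[of A 0 0] by simp
lemma bop_minus: "bop A \<Longrightarrow> A (- x) = - A x"
  using bop_scaleC[of A "-1" x] by (simp add: scaleC_minus1)
lemma bop_diff: assumes "bop A" shows "A (x - y) = A x - A y"
  using bop_add[OF assms, of x "-y"] bop_minus[OF assms, of y] by simp

lemma bop_bound: assumes "bop A" obtains K where "K > 0" "\<And>x. norm (A x) \<le> norm x * K"
proof -
  from assms obtain K where K: "\<And>x. norm (A x) \<le> norm x * K" by (auto simp: bop_def)
  have "norm (A x) \<le> norm x * (max K 0 + 1)" for x
    using K[of x] by (smt (verit, ccfv_SIG) mult_left_mono norm_ge_zero)
  then show ?thesis using that[of "max K 0 + 1"] by auto
qed

lemma bop_bounded_linear: assumes "bop A" shows "bounded_linear A"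
proof
  show "A (x + y) = A x + A y" for x y using assms by (rule bop_add)
  show "A (r *\<^sub>R x) = r *\<^sub>R A x" for r x using assms by (rule bop_scaleR)
  show "\<exists>K. \<forall>x. norm (A x) \<le> norm x * K" using assms by (auto simp: bop_def)
qed

lemma bop_tendsto: "bop A \<Longrightarrow> (f \<longlongrightarrow> l) F \<Longrightarrow> ((\<lambda>n. A (f n)) \<longlongrightarrow> A l) F"
  using bounded_linear.tendsto[OF bop_bounded_linear] by blast

lemma bop_continuous: "bop A \<Longrightarrow> continuous_on S A"
  using bounded_linear.continuous_on[OF bop_bounded_linear, of A S "\<lambda>x. x"] by (simp add: continuous_on_id)

lemma bop_id: "bop (id :: 'a::complex_inner \<Rightarrow> 'a)"
  by (auto simp: bop_def intro: exI[of _ 1])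

lemma bop_zero_op: "bop (\<lambda>x::'a::complex_inner. 0::'a)"
  by (auto simp: bop_def intro: exI[of _ 0])

lemma bop_add_op: assumes "bop A" "bop B" shows "bop (\<lambda>x. A x + B x)"
proof -
  obtain K where K: "\<And>x. norm (A x) \<le> norm x * K" using bop_bound[OF assms(1)] by blast
  obtain L where L: "\<And>x. norm (B x) \<le> norm x * L" using bop_bound[OF assms(2)] by blast
  have f3: "norm (A x + B x) \<le> norm x * (K + L)" for x
    using K[of x] L[of x] norm_triangle_ineq[of "A x" "B x"] by (simp add: distrib_left)
  have f1: "A (x + y) + B (x + y) = (A x + B x) + (A y + B y)" for x y
    using bop_add[OF assms(1)] bop_add[OF assms(2)] by simp
  have f2: "A (scaleC c x) + B (scaleC c x) = scaleC c (A x + B x)" for c x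
    using bop_scaleC[OF assms(1)] bop_scaleC[OF assms(2)] by (simp add: scaleC_add_right)
  show ?thesis by (rule bopI[where K="K+L" and A="\<lambda>x. A x + B x", OF f1 f2 f3])
qed

lemma bop_scaleC_op: assumes "bop A" shows "bop (\<lambda>x. scaleC c (A x))"
proof -
  obtain K where K: "\<And>x. norm (A x) \<le> norm x * K" using bop_bound[OF assms(1)] by blast
  have f3: "norm (scaleC c (A x)) \<le> norm x * (cmod c * K)" for x
    using mult_left_mono[OF K[of x], of "cmod c"] by (simp add: norm_scaleC mult.left_commute)
  have f1: "scaleC c (A (x + y)) = scaleC c (A x) + scaleC c (A y)" for x y
    using bop_add[OF assms] by (simp add: scaleC_add_right)
  have f2: "scaleC c (A (scaleC d x)) = scaleC d (scaleC c (A x))" for d x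
    using bop_scaleC[OF assms] by (simp add: scaleC_scaleC mult.commute)
  show ?thesis by (rule bopI[where A="\<lambda>x. scaleC c (A x)", OF f1 f2 f3])
qed

lemma bop_diff_op: assumes "bop A" "bop B" shows "bop (\<lambda>x. A x - B x)"
proof -
  have "bop (\<lambda>x. A x + scaleC (-1) (B x))" by (intro bop_add_op bop_scaleC_op assms)
  then show ?thesis by (simp add: scaleC_minus1)
qed

lemma bop_sum_op: assumes "\<And>i. i \<in> F \<Longrightarrow> bop (B i)" shows "bop (\<lambda>x. \<Sum>i\<in>F. B i x)"
  using assms
proof (induction F rule: infinite_finite_induct)
  case (infinite F) then show ?case by (simp add: bop_zero_op)
next
  case empty then show ?case by (simp add: bop_zero_op)
next
  case (insert i F)
  then show ?case by (simp add: bop_add_op)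
qed

lemma bop_sum: assumes "bop A" shows "A (\<Sum>i\<in>F. f i) = (\<Sum>i\<in>F. A (f i))"
  by (induction F rule: infinite_finite_induct) (auto simp: bop_zero[OF assms] bop_add[OF assms])

lemma bop_comp: assumes "bop A" "bop B" shows "bop (\<lambda>x. A (B x))"
proof -
  obtain K where K: "K > 0" "\<And>x. norm (A x) \<le> norm x * K" using bop_bound[OF assms(1)] by blast
  obtain L where L: "\<And>x. norm (B x) \<le> norm x * L" using bop_bound[OF assms(2)] by blast
  have f3: "norm (A (B x)) \<le> norm x * (L * K)" for x
  proof -
    have "norm (A (B x)) \<le> norm (B x) * K" by (rule K)
    also have "\<dots> \<le> norm x * L * K" using L[of x] K(1) by (simp add: mult_right_mono)
    finally show ?thesis by (simp add: mult.assoc)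
  qed
  have f1: "A (B (x + y)) = A (B x) + A (B y)" for x y using bop_add[OF assms(1)] bop_add[OF assms(2)] by simp
  have f2: "A (B (scaleC c x)) = scaleC c (A (B x))" for c x using bop_scaleC[OF assms(1)] bop_scaleC[OF assms(2)] by simp
  show ?thesis by (rule bopI[where A="\<lambda>x. A (B x)", OF f1 f2 f3])
qed

section \<open>Positive operators\<close>

lemma pos_op_bop: "pos_op A \<Longrightarrow> bop A" by (simp add: pos_op_def)

lemma pos_op_real: "pos_op A \<Longrightarrow> cinner (A x) x = complex_of_real (Re (cinner (A x) x))"
  by (simp add: pos_op_def complex_eq_iff)

lemma pos_op_ge0: "pos_op A \<Longrightarrow> 0 \<le> Re (cinner (A x) x)"
  by (simp add: pos_op_def)

lemma pos_op_hermitian: assumes "pos_op A" shows "cinner (A y) x = cnj (cinner (A x) y)"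
proof -
  have bA: "bop A" using assms by (rule pos_op_bop)
  have expand: "cinner (A (u + v)) (u + v) = cinner (A u) u + cinner (A u) v + cinner (A v) u + cinner (A v) v" for u v
    by (simp add: bop_add[OF bA] cinner_add_left cinner_add_right)
  have "Im (cinner (A (x + y)) (x + y)) = 0" using assms by (simp add: pos_op_def)
  moreover have "Im (cinner (A x) x) = 0" "Im (cinner (A y) y) = 0" using assms by (simp_all add: pos_op_def)
  ultimately have 1: "Im (cinner (A x) y) + Im (cinner (A y) x) = 0" by (simp add: expand)
  have "Im (cinner (A (x + scaleC \<i> y)) (x + scaleC \<i> y)) = 0" using assms by (simp add: pos_op_def)
  moreover have "Im (cinner (A (scaleC \<i> y)) (scaleC \<i> y)) = 0" using assms by (simp add: pos_op_def)
  ultimately have "Im (cinner (A x) (scaleC \<i> y)) + Im (cinner (A (scaleC \<i> y)) x) = 0"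
    using \<open>Im (cinner (A x) x) = 0\<close> by (simp add: expand)
  then have 2: "Re (cinner (A y) x) - Re (cinner (A x) y) = 0"
    by (simp add: bop_scaleC[OF bA] cinner_scaleC_left cinner_scaleC_right)
  show ?thesis using 1 2 by (simp add: complex_eq_iff)
qed

lemma pos_op_cs_trick:
  assumes "pos_op D" "C > 0" "\<And>z. Re (cinner (D z) z) \<le> C * (norm z)^2"
  shows "(norm (D x))^2 \<le> C * Re (cinner (D x) x)"
proof -
  have bD: "bop D" using assms(1) by (rule pos_op_bop)
  define a where "a = (norm (D x))^2"
  define t where "t = 1 / C"
  define z where "z = D x"
  have h1: "cinner (D x) z = complex_of_real a" by (simp add: z_def a_def cinner_self)
  have h2: "cinner (D z) x = complex_of_real a"
    using pos_op_hermitian[OF assms(1), of z x] h1 by simp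
  have "0 \<le> Re (cinner (D (x - scaleR t z)) (x - scaleR t z))" by (rule pos_op_ge0[OF assms(1)])
  also have "cinner (D (x - scaleR t z)) (x - scaleR t z) =
      cinner (D x) x - complex_of_real t * cinner (D x) z - complex_of_real t * cinner (D z) x
      + complex_of_real t * complex_of_real t * cinner (D z) z"
    by (simp add: bop_diff[OF bD] bop_scaleR[OF bD] cinner_diff_left cinner_diff_right
        cinner_scaleR_left cinner_scaleR_right algebra_simps)
  finally have "0 \<le> Re (cinner (D x) x) - 2 * t * a + t * t * Re (cinner (D z) z)"
    by (simp add: h1 h2 algebra_simps)
  moreover have "Re (cinner (D z) z) \<le> C * a" using assms(3)[of z] by (simp add: a_def z_def)
  moreover have "t * t \<ge> 0" by simp
  ultimately have "0 \<le> Re (cinner (D x) x) - 2 * t * a + t * t * (C * a)"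
    by (smt (verit, best) mult_left_mono)
  then have "0 \<le> Re (cinner (D x) x) - a / C" using assms(2) by (simp add: t_def field_simps power2_eq_square)
  then show ?thesis using assms(2) by (simp add: a_def field_simps)
qed

section \<open>Projections\<close>

lemma orth_proj_bop: "orth_proj q \<Longrightarrow> bop q" by (simp add: orth_proj_def selfadj_def)
lemma orth_proj_sa: "orth_proj q \<Longrightarrow> cinner (q x) y = cinner x (q y)" by (simp add: orth_proj_def selfadj_def)
lemma orth_proj_idem: "orth_proj q \<Longrightarrow> q (q x) = q x" by (simp add: orth_proj_def)

lemma proj_cinner1: assumes "orth_proj q" shows "cinner (q x) x = complex_of_real ((norm (q x))^2)"
proof -
  have "cinner (q x) x = cinner (q (q x)) x" using orth_proj_idem[OF assms] by simp
  also have "\<dots> = cinner (q x) (q x)" by (rule orth_proj_sa[OF assms])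
  finally show ?thesis by (simp add: cinner_self)
qed

lemma proj_cinner2: "orth_proj q \<Longrightarrow> cinner x (q x) = complex_of_real ((norm (q x))^2)"
  using orth_proj_sa[of q x x] proj_cinner1[of q x] by simp

lemma proj_norm_diff: assumes "orth_proj q" shows "(norm (x - q x))^2 = (norm x)^2 - (norm (q x))^2"
proof -
  have "complex_of_real ((norm (x - q x))^2) = cinner (x - q x) (x - q x)" by (simp add: cinner_self)
  also have "\<dots> = cinner x x - cinner x (q x) - cinner (q x) x + cinner (q x) (q x)"
    by (simp add: cinner_diff_left cinner_diff_right)
  also have "\<dots> = complex_of_real ((norm x)^2 - (norm (q x))^2)"
    by (simp add: proj_cinner1[OF assms] proj_cinner2[OF assms] cinner_self)
  finally show ?thesis using of_real_eq_iff by blast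
qed

lemma proj_pos: assumes "orth_proj q" shows "pos_op q"
  using assms by (simp add: pos_op_def orth_proj_bop proj_cinner1)

lemma proj_le_A: assumes "orth_proj r" "orth_proj q" "\<And>x. q (r x) = r x"
  shows "op_le r q"
proof -
  have "norm (r x) \<le> norm (q x)" for x
  proof -
    have "complex_of_real ((norm (r x))^2) = cinner (q (r x)) x" using assms(3) proj_cinner1[OF assms(1)] by simp
    also have "\<dots> = cinner (r x) (q x)" by (rule orth_proj_sa[OF assms(2)])
    finally have "(norm (r x))^2 \<le> norm (r x) * norm (q x)"
      by (metis cauchy_schwarz norm_of_real abs_power2 real_norm_def)
    then show ?thesis
      by (metis mult_le_cancel_left1 norm_ge_zero order.trans power2_eq_square not_le mult_le_cancel_right1 zero_less_mult_iff mult_left_le_imp_le)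
  qed
  then have "(norm (r x))^2 \<le> (norm (q x))^2" for x by (simp add: power_mono)
  moreover have "bop (\<lambda>x. q x - r x)" using assms by (simp add: bop_diff_op orth_proj_bop)
  moreover have "cinner (q x - r x) x = complex_of_real ((norm (q x))^2 - (norm (r x))^2)" for x
    by (simp only: cinner_diff_left proj_cinner1[OF assms(1)] proj_cinner1[OF assms(2)] of_real_diff)
  ultimately show ?thesis unfolding op_le_def pos_op_def by simp
qed

lemma proj_le_B: assumes "orth_proj r" "orth_proj q" "op_le r q" shows "q (r x) = r x"
proof -
  have "0 \<le> Re (cinner (q (r x) - r (r x)) (r x))" using assms(3) by (simp add: op_le_def pos_op_def)
  then have "(norm (r x))^2 \<le> (norm (q (r x)))^2"
    using orth_proj_idem[OF assms(1)] proj_cinner1[OF assms(2), of "r x"] proj_cinner1[OF assms(1), of "r x"]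
    by (simp add: cinner_diff_left)
  then have "(norm (r x - q (r x)))^2 \<le> 0" by (simp add: proj_norm_diff[OF assms(2)])
  then show ?thesis by simp
qed

lemma rank_one_proj: assumes "norm \<xi> = 1" shows "orth_proj (rank_one (\<xi>::'a::complex_inner))"
proof -
  have "bop (rank_one \<xi>)"
    unfolding bop_def rank_one_def
  proof (intro conjI allI exI)
    fix x y :: 'a and c
    show "scaleC (cinner (x + y) \<xi>) \<xi> = scaleC (cinner x \<xi>) \<xi> + scaleC (cinner y \<xi>) \<xi>"
      by (simp add: cinner_add_left scaleC_add_left)
    show "scaleC (cinner (scaleC c x) \<xi>) \<xi> = scaleC c (scaleC (cinner x \<xi>) \<xi>)"
      by (simp add: cinner_scaleC_left scaleC_scaleC)
    show "norm (scaleC (cinner x \<xi>) \<xi>) \<le> norm x * 1"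
      using cauchy_schwarz[of x \<xi>] assms by (simp add: norm_scaleC)
  qed
  moreover have "cinner (rank_one \<xi> x) y = cinner x (rank_one \<xi> y)" for x y
    by (simp add: rank_one_def cinner_scaleC_left cinner_scaleC_right cinner_commute[of \<xi> y] mult.commute)
  moreover have "rank_one \<xi> (rank_one \<xi> x) = rank_one \<xi> x" for x
    using assms by (simp add: rank_one_def cinner_scaleC_left cinner_self)
  ultimately show ?thesis by (simp add: orth_proj_def selfadj_def)
qed




lemma bounded_linear_scaleC: "bounded_linear (scaleC c :: 'a::complex_inner \<Rightarrow> 'a)"
proof
  fix x y :: 'a and r :: real
  show "scaleC c (x + y) = scaleC c x + scaleC c y" by (rule scaleC_add_right)
  show "scaleC c (r *\<^sub>R x) = r *\<^sub>R scaleC c x"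
    by (simp add: scaleR_scaleC scaleC_scaleC mult.commute)
  show "\<exists>K. \<forall>x::'a. norm (scaleC c x) \<le> norm x * K"
    by (rule exI[of _ "cmod c"]) (simp add: norm_scaleC mult.commute)
qed

lemma quad_scaleR: assumes "bop B"
  shows "Re (cinner (B (scaleR t z)) (scaleR t z)) = t^2 * Re (cinner (B z) z)"
  by (simp add: bop_scaleR[OF assms] cinner_scaleR_left cinner_scaleR_right power2_eq_square)

lemma quad_parallelogram: assumes "bop B"
  shows "cinner (B (a + b)) (a + b) + cinner (B (a - b)) (a - b) = 2 * cinner (B a) a + 2 * cinner (B b) b"
  by (simp add: bop_add[OF assms] bop_diff[OF assms] cinner_add_left cinner_add_right
      cinner_diff_left cinner_diff_right algebra_simps)

lemma uniform_bound_baire: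
  fixes A :: "nat \<Rightarrow> 'a::chilbert_space \<Rightarrow> 'a"
  assumes pos: "\<And>N. pos_op (A N)"
    and bnd: "\<And>\<eta>. \<exists>M. \<forall>N. Re (cinner (A N \<eta>) \<eta>) \<le> M"
  shows "\<exists>C>0. \<forall>N z. Re (cinner (A N z) z) \<le> C * (norm z)^2"
proof -
  define Q where "Q N z = Re (cinner (A N z) z)" for N z
  define F where "F k = {z. \<forall>N. Q N z \<le> real k}" for k :: nat
  have bA: "bop (A N)" for N using pos by (rule pos_op_bop)
  have closedF: "closed (F k)" for k
    unfolding closed_sequential_limits
  proof (intro allI impI)
    fix x l assume h: "(\<forall>n. x n \<in> F k) \<and> x \<longlonglongrightarrow> l"
    have "Q N l \<le> real k" for N
    proof (rule LIMSEQ_le_const2)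
      show "(\<lambda>n. Q N (x n)) \<longlonglongrightarrow> Q N l"
        unfolding Q_def by (intro tendsto_Re tendsto_cinner bop_tendsto[OF bA] h[THEN conjunct2])
      show "\<exists>M. \<forall>n\<ge>M. Q N (x n) \<le> real k" using h by (auto simp: F_def)
    qed
    then show "l \<in> F k" by (simp add: F_def)
  qed
  have cover: "\<Union>(range F) = UNIV"
  proof -
    have 1: "z \<in> F (nat \<lceil>M\<rceil>)" if "\<forall>N. Q N z \<le> M" for z M
    proof -
      have "M \<le> real (nat \<lceil>M\<rceil>)" by (rule real_nat_ceiling_ge)
      then have "\<forall>N. Q N z \<le> real (nat \<lceil>M\<rceil>)" using that by (meson order_trans)
      then show ?thesis unfolding F_def by simp
    qed
    have "z \<in> \<Union>(range F)" for z
    proof -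
      obtain M where "\<forall>N. Q N z \<le> M" using bnd[of z] unfolding Q_def by blast
      then have "z \<in> F (nat \<lceil>M\<rceil>)" by (rule 1)
      then show ?thesis by blast
    qed
    then show ?thesis by blast
  qed
  have "\<exists>k. interior (F k) \<noteq> {}"
  proof (rule ccontr)
    assume "\<not> ?thesis"
    then have "euclidean interior_of \<Union>(range F) = {}"
      by (intro Baire_category_alt) (auto simp: completely_metrizable_space_euclidean closedF
          closed_closedin[symmetric])
    then show False using cover by simp
  qed
  then obtain k z0 where "z0 \<in> interior (F k)" by blast
  then obtain r where r: "r > 0" "ball z0 r \<subseteq> F k"
    by (meson open_contains_ball open_interior interior_subset order_trans)
  have Qh: "Q N h \<le> 4 * real k" if "norm h < r" for N h
  proof -
    have "z0 + h \<in> F k" using r that by (auto simp: dist_norm)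
    moreover have "z0 \<in> F k" using r by auto
    ultimately have 1: "Q N (z0 + h) \<le> real k" "Q N z0 \<le> real k" by (auto simp: F_def)
    have "Q N ((z0 + h) + z0) + Q N ((z0 + h) - z0) = 2 * Q N (z0 + h) + 2 * Q N z0"
      using arg_cong[OF quad_parallelogram[OF bA, of N "z0 + h" z0], of Re] by (simp add: Q_def)
    moreover have "Q N ((z0 + h) + z0) \<ge> 0" unfolding Q_def by (rule pos_op_ge0[OF pos])
    ultimately show ?thesis using 1 by simp
  qed
  define C where "C = 16 * real k / r^2 + 1"
  have "16 * real k / r^2 \<ge> 0" by simp
  then have Cpos: "C > 0" unfolding C_def by linarith
  have "Q N z \<le> C * (norm z)^2" for N z
  proof (cases "z = 0")
    case True then show ?thesis by (simp add: Q_def bop_zero[OF bA])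
  next
    case False
    define t where "t = r / (2 * norm z)"
    have nz: "norm z > 0" using False by simp
    have tpos: "t > 0" using r nz by (simp add: t_def)
    have "norm (scaleR t z) = r / 2" using nz tpos r by (simp add: t_def)
    then have "Q N (scaleR t z) \<le> 4 * real k" using r by (intro Qh) simp
    then have "t^2 * Q N z \<le> 4 * real k" by (simp add: Q_def quad_scaleR[OF bA])
    then have "Q N z \<le> 4 * real k / t^2" using tpos by (simp add: field_simps)
    also have "4 * real k / t^2 = 16 * real k / r^2 * (norm z)^2"
      using nz r by (simp add: t_def field_simps power2_eq_square)
    also have "\<dots> \<le> C * (norm z)^2" unfolding C_def by (rule mult_right_mono) auto
    finally show ?thesis .
  qed
  then show ?thesis using Cpos unfolding Q_def by blast
qed


lemma monotone_conv:
  fixes A :: "nat \<Rightarrow> 'a::chilbert_space \<Rightarrow> 'a"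
  assumes pos: "\<And>N. pos_op (A N)" and mono: "\<And>m N. m \<le> N \<Longrightarrow> pos_op (\<lambda>x. A N x - A m x)"
    and bnd: "\<And>\<eta>. \<exists>M. \<forall>N. Re (cinner (A N \<eta>) \<eta>) \<le> M"
  shows "\<exists>S. bop S \<and> (\<forall>\<eta>. (\<lambda>N. A N \<eta>) \<longlonglongrightarrow> S \<eta>)"
proof -
  obtain C where C: "C > 0" "\<And>N z. Re (cinner (A N z) z) \<le> C * (norm z)^2"
    using uniform_bound_baire[OF pos bnd] by blast
  define Q where "Q N z = Re (cinner (A N z) z)" for N z
  have bA: "bop (A N)" for N using pos by (rule pos_op_bop)
  have Qmono: "Q m z \<le> Q N z" if "m \<le> N" for m N z
  proof -
    have "0 \<le> Re (cinner (A N z - A m z) z)" using pos_op_ge0[OF mono[OF that], of z] by simp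
    then show ?thesis by (simp add: Q_def cinner_diff_left)
  qed
  have diffbound: "(norm (A N z - A m z))^2 \<le> C * (Q N z - Q m z)" if "m \<le> N" for m N z
  proof -
    have "(norm ((\<lambda>x. A N x - A m x) z))^2 \<le> C * Re (cinner ((\<lambda>x. A N x - A m x) z) z)"
    proof (rule pos_op_cs_trick[OF mono[OF that] C(1)])
      fix w
      have "Re (cinner (A N w - A m w) w) = Q N w - Q m w" by (simp add: Q_def cinner_diff_left)
      also have "\<dots> \<le> Q N w" using pos_op_ge0[OF pos, of m w] by (simp add: Q_def)
      also have "\<dots> \<le> C * (norm w)^2" using C(2) by (simp add: Q_def)
      finally show "Re (cinner ((\<lambda>x. A N x - A m x) w) w) \<le> C * (norm w)^2" by simp
    qed
    then show ?thesis by (simp add: Q_def cinner_diff_left)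
  qed
  have conv: "convergent (\<lambda>N. A N z)" for z
  proof -
    have inc: "incseq (\<lambda>N. Q N z)" by (intro monoI Qmono)
    have "bdd_above (range (\<lambda>N. Q N z))"
      using C(2) unfolding Q_def by (intro bdd_aboveI[where M="C * (norm z)^2"]) auto
    then have "(\<lambda>N. Q N z) \<longlonglongrightarrow> (SUP N. Q N z)" using LIMSEQ_incseq_SUP inc by blast
    then have cq: "Cauchy (\<lambda>N. Q N z)" by (rule LIMSEQ_imp_Cauchy)
    have "Cauchy (\<lambda>N. A N z)"
    proof (rule metric_CauchyI)
      fix e :: real assume "e > 0"
      then have "e^2 / C > 0" using C(1) by simp
      then obtain M where M: "\<forall>m\<ge>M. \<forall>n\<ge>M. dist (Q m z) (Q n z) < e^2 / C"
        using cq unfolding Cauchy_def by blast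
      have key: "dist (A m z) (A n z) < e" if "m \<le> n" "m \<ge> M" "n \<ge> M" for m n
      proof -
        have "(norm (A n z - A m z))^2 \<le> C * (Q n z - Q m z)" by (rule diffbound[OF that(1)])
        also have "\<dots> < C * (e^2 / C)"
        proof (intro mult_strict_left_mono C(1))
          have "dist (Q m z) (Q n z) < e^2 / C" using M that(2,3) by blast
          then show "Q n z - Q m z < e^2 / C" by (simp add: dist_real_def abs_minus_commute)
        qed
        also have "\<dots> = e^2" using C(1) by simp
        finally have "(norm (A n z - A m z))^2 < e^2" .
        then have "norm (A n z - A m z) < e" using \<open>e>0\<close> by (meson power2_less_imp_less less_imp_le)
        then show ?thesis by (simp add: dist_norm norm_minus_commute)
      qed
      have "dist (A m z) (A n z) < e" if "m \<ge> M" "n \<ge> M" for m n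
      proof (cases "m \<le> n")
        case True then show ?thesis using key that by blast
      next
        case False then show ?thesis using key[of n m] that by (simp add: dist_commute)
      qed
      then show "\<exists>M. \<forall>m\<ge>M. \<forall>n\<ge>M. dist (A m z) (A n z) < e" by blast
    qed
    then show ?thesis by (simp add: Cauchy_convergent_iff)
  qed
  define S where "S z = lim (\<lambda>N. A N z)" for z
  have lim: "(\<lambda>N. A N z) \<longlonglongrightarrow> S z" for z using conv by (simp add: S_def convergent_LIMSEQ_iff)
  have f1: "S (x + y) = S x + S y" for x y
  proof (rule LIMSEQ_unique[OF lim])
    show "(\<lambda>N. A N (x + y)) \<longlonglongrightarrow> S x + S y"
      using tendsto_add[OF lim[of x] lim[of y]] by (simp add: bop_add[OF bA])
  qed
  have f2: "S (scaleC c x) = scaleC c (S x)" for c x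
  proof (rule LIMSEQ_unique[OF lim])
    show "(\<lambda>N. A N (scaleC c x)) \<longlonglongrightarrow> scaleC c (S x)"
      using bounded_linear.tendsto[OF bounded_linear_scaleC lim[of x]] by (simp add: bop_scaleC[OF bA])
  qed
  have f3: "norm (S z) \<le> norm z * C" for z
  proof (rule LIMSEQ_le_const2[OF tendsto_norm[OF lim[of z]]])
    have "norm (A N z) \<le> norm z * C" for N
    proof -
      have "(norm (A N z))^2 \<le> C * Re (cinner (A N z) z)" by (rule pos_op_cs_trick[OF pos C(1) C(2)])
      also have "\<dots> \<le> C * (C * (norm z)^2)" using C by (intro mult_left_mono) auto
      also have "\<dots> = (norm z * C)^2" by (simp add: power2_eq_square)
      finally show ?thesis using C(1) by (meson power2_le_imp_le mult_nonneg_nonneg norm_ge_zero less_imp_le)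
    qed
    then show "\<exists>M. \<forall>n\<ge>M. norm (A n z) \<le> norm z * C" by blast
  qed
  have "bop S" by (rule bopI[where A=S, OF f1 f2 f3])
  then show ?thesis using lim by blast
qed




definition csubspace :: "'a::complex_inner set \<Rightarrow> bool" where
  "csubspace M \<longleftrightarrow> 0 \<in> M \<and> (\<forall>x\<in>M. \<forall>y\<in>M. x + y \<in> M) \<and> (\<forall>c. \<forall>x\<in>M. scaleC c x \<in> M)"

lemma csub_add: "csubspace M \<Longrightarrow> x \<in> M \<Longrightarrow> y \<in> M \<Longrightarrow> x + y \<in> M" by (simp add: csubspace_def)
lemma csub_scaleC: "csubspace M \<Longrightarrow> x \<in> M \<Longrightarrow> scaleC c x \<in> M" by (simp add: csubspace_def)
lemma csub_zero: "csubspace M \<Longrightarrow> 0 \<in> M" by (simp add: csubspace_def)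
lemma csub_diff: assumes "csubspace M" "x \<in> M" "y \<in> M" shows "x - y \<in> M"
proof -
  have "x + scaleC (-1) y \<in> M" by (intro csub_add csub_scaleC assms)
  then show ?thesis by (simp add: scaleC_minus1)
qed
lemma csub_scaleR: "csubspace M \<Longrightarrow> x \<in> M \<Longrightarrow> scaleR r x \<in> M"
  by (simp add: scaleR_scaleC csub_scaleC)

lemma norm_parallelogram:
  "(norm (a + b))^2 + (norm (a - b))^2 = 2 * (norm (a::'a::complex_inner))^2 + 2 * (norm b)^2"
proof -
  have "complex_of_real ((norm (a + b))^2 + (norm (a - b))^2) = cinner (a + b) (a + b) + cinner (a - b) (a - b)"
    by (simp add: cinner_self)
  also have "\<dots> = 2 * cinner a a + 2 * cinner b b"
    by (simp add: cinner_add_left cinner_add_right cinner_diff_left cinner_diff_right algebra_simps)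
  also have "\<dots> = complex_of_real (2 * (norm a)^2 + 2 * (norm b)^2)" by (simp add: cinner_self)
  finally show ?thesis using of_real_eq_iff by blast
qed

lemma closest_point_orth:
  fixes M :: "'a::chilbert_space set"
  assumes sub: "csubspace M" and cl: "closed M"
  shows "\<exists>m\<in>M. \<forall>y\<in>M. cinner (x - m) y = 0"
proof -
  define d where "d = infdist x M"
  have d0: "d \<ge> 0" by (simp add: d_def infdist_nonneg)
  have dle: "d \<le> norm (x - y)" if "y \<in> M" for y
    using infdist_le[OF that, of x] by (simp add: d_def dist_norm)
  have ne: "M \<noteq> {}" using csub_zero[OF sub] by blast
  have "\<exists>y\<in>M. norm (x - y) < d + 1 / (real n + 1)" for n :: nat
  proof -
    have i: "(INF a\<in>M. dist x a) < d + 1 / (real n + 1)"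
      using infdist_notempty[OF ne, of x] by (simp add: d_def add_pos_nonneg)
    have b: "bdd_below ((\<lambda>a. dist x a) ` M)" by (rule bdd_belowI[of _ 0]) auto
    have "\<exists>a\<in>M. dist x a < d + 1 / (real n + 1)" using i unfolding cINF_less_iff[OF ne b] .
    then show ?thesis by (simp add: dist_norm)
  qed
  then obtain y where yM: "\<And>n. y n \<in> M" and yd: "\<And>n. norm (x - y n) < d + 1 / (real n + 1)"
    by metis
  define E where "E n = (2 * d + 1) / (real n + 1)" for n :: nat
  have ysq: "(norm (x - y n))^2 \<le> d^2 + E n" for n
  proof -
    define \<epsilon> where "\<epsilon> = 1 / (real n + 1)"
    have e0: "0 < \<epsilon>" "\<epsilon> \<le> 1" by (auto simp: \<epsilon>_def)
    have "(norm (x - y n))^2 \<le> (d + \<epsilon>)^2"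
      using yd[of n] by (intro power_mono) (auto simp: \<epsilon>_def)
    also have "\<dots> = d^2 + 2 * d * \<epsilon> + \<epsilon> * \<epsilon>" by (simp add: power2_eq_square algebra_simps)
    also have "\<dots> \<le> d^2 + 2 * d * \<epsilon> + \<epsilon>" using e0 by (simp add: mult_left_le)
    also have "\<dots> = d^2 + E n" by (simp add: E_def \<epsilon>_def field_simps)
    finally show ?thesis .
  qed
  have ydiff: "(norm (y n - y m))^2 \<le> 2 * E n + 2 * E m" for n m
  proof -
    define mid where "mid = scaleR (1/2) (y n + y m)"
    have "mid \<in> M" unfolding mid_def by (intro csub_scaleR csub_add yM sub)
    then have "d^2 \<le> (norm (x - mid))^2" using dle d0 by (simp add: power_mono)
    have "(x - y n) + (x - y m) = scaleR 2 (x - mid)" by (simp add: mid_def algebra_simps scaleR_2)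
    then have "(norm ((x - y n) + (x - y m)))^2 = 4 * (norm (x - mid))^2"
      by (simp add: power2_eq_square)
    moreover have "(x - y n) - (x - y m) = y m - y n" by simp
    ultimately have "4 * (norm (x - mid))^2 + (norm (y m - y n))^2 = 2 * (norm (x - y n))^2 + 2 * (norm (x - y m))^2"
      using norm_parallelogram[of "x - y n" "x - y m"] by simp
    then show ?thesis using ysq[of n] ysq[of m] \<open>d^2 \<le> (norm (x - mid))^2\<close>
      by (simp add: norm_minus_commute)
  qed
  have "Cauchy y"
  proof (rule metric_CauchyI)
    fix e :: real assume e: "e > 0"
    obtain N :: nat where N: "4 * (2 * d + 1) / e^2 < real N" using reals_Archimedean2 by blast
    have "dist (y n) (y m) < e" if "n \<ge> N" "m \<ge> N" for n m
    proof -
      have En: "E k \<le> (2 * d + 1) / (real N + 1)" if "k \<ge> N" for k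
        unfolding E_def using d0 that by (intro divide_left_mono) auto
      have "(norm (y n - y m))^2 \<le> 4 * ((2 * d + 1) / (real N + 1))"
        using ydiff[of n m] En[OF that(1)] En[OF that(2)] by linarith
      also have "\<dots> < e^2"
      proof -
        have "4 * (2 * d + 1) < e^2 * (real N + 1)"
          using N e by (simp add: field_simps) (smt (verit) mult_left_mono zero_le_power2)
        then show ?thesis by (simp add: field_simps)
      qed
      finally show ?thesis using e by (simp add: dist_norm power2_less_imp_less)
    qed
    then show "\<exists>N. \<forall>n\<ge>N. \<forall>m\<ge>N. dist (y n) (y m) < e" by blast
  qed
  then obtain m where lim: "y \<longlonglongrightarrow> m" using Cauchy_convergent_iff convergent_def by blast
  have mM: "m \<in> M" using cl yM lim closed_sequentially by blast
  have nm: "norm (x - m) \<le> d"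
  proof (rule tendsto_le[OF _ _ tendsto_norm[OF tendsto_diff[OF tendsto_const lim]]])
    show "((\<lambda>n. d + 1 / (real n + 1)) \<longlongrightarrow> d) sequentially"
      using tendsto_add[OF tendsto_const[of d] LIMSEQ_inverse_real_of_nat_add[of 0]]
      by (simp add: inverse_eq_divide add.commute)
    show "\<forall>\<^sub>F n in sequentially. norm (x - y n) \<le> d + 1 / (real n + 1)"
      using yd by (simp add: less_imp_le)
  qed simp
  have "cinner (x - m) z = 0" if zM: "z \<in> M" for z
  proof (rule ccontr)
    assume cne: "cinner (x - m) z \<noteq> 0"
    define c where "c = cinner (x - m) z"
    define w where "w = x - m"
    define s where "s = 1 / ((norm z)^2 + 1)"
    have pz: "0 < (norm z)^2 + 1" using zero_le_power2[of "norm z"] by linarith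
    have s0: "s > 0" using pz by (simp add: s_def)
    have s1: "s * (norm z)^2 < 1" using pz by (simp add: s_def field_simps)
    define a where "a = complex_of_real s * c"
    have "m + scaleC a z \<in> M" by (intro csub_add csub_scaleC mM zM sub)
    then have "d \<le> norm (x - (m + scaleC a z))" by (rule dle)
    then have "norm w \<le> norm (w - scaleC a z)" using nm by (simp add: w_def algebra_simps)
    then have ineq: "(norm w)^2 \<le> (norm (w - scaleC a z))^2" by (simp add: power_mono)
    have cc: "c * cnj c = complex_of_real ((cmod c)^2)" by (rule complex_norm_square[symmetric])
    have "complex_of_real ((norm (w - scaleC a z))^2) = cinner (w - scaleC a z) (w - scaleC a z)"
      by (simp add: cinner_self)
    also have "\<dots> = cinner w w - cnj a * cinner w z - a * cinner z w + a * cnj a * cinner z z"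
      by (simp add: cinner_diff_left cinner_diff_right cinner_scaleC_left cinner_scaleC_right algebra_simps)
    also have "\<dots> = complex_of_real ((norm w)^2 - 2 * s * (cmod c)^2 + s * s * (cmod c)^2 * (norm z)^2)"
      using cc by (simp add: a_def c_def w_def cinner_self cinner_commute[of z "x - m"] algebra_simps)
    finally have "(norm (w - scaleC a z))^2 = (norm w)^2 - 2 * s * (cmod c)^2 + s * s * (cmod c)^2 * (norm z)^2"
      using of_real_eq_iff by blast
    with ineq have "0 \<le> s * (cmod c)^2 * (s * (norm z)^2 - 2)" by (simp add: algebra_simps)
    moreover have "s * (cmod c)^2 > 0" using s0 cne by (simp add: c_def)
    moreover have "s * (norm z)^2 - 2 < 0" using s1 by simp
    ultimately show False by (simp add: mult_pos_neg zero_le_mult_iff)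
  qed
  then show ?thesis using mM by blast
qed


lemma orth_unique:
  assumes sub: "csubspace M" and "m1 \<in> M" "m2 \<in> M"
    and "\<forall>y\<in>M. cinner (x - m1) y = 0" "\<forall>y\<in>M. cinner (x - m2) y = 0"
  shows "m1 = m2"
proof -
  have d: "m1 - m2 \<in> M" by (rule csub_diff[OF sub assms(2,3)])
  have "cinner (m1 - m2) (m1 - m2) = cinner (x - m2) (m1 - m2) - cinner (x - m1) (m1 - m2)"
    by (simp add: cinner_diff_left)
  also have "\<dots> = 0" using assms(4,5) d by simp
  finally have "cinner (m1 - m2) (m1 - m2) = 0" .
  then have "m1 - m2 = 0" by (simp only: cinner_eq_zero_iff)
  then show ?thesis by simp
qed

lemma proj_exists:
  fixes M :: "'a::chilbert_space set"
  assumes sub: "csubspace M" and cl: "closed M"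
  shows "\<exists>q. orth_proj q \<and> (\<forall>x. q x \<in> M) \<and> (\<forall>x\<in>M. q x = x)"
proof -
  define P where "P x = (SOME m. m \<in> M \<and> (\<forall>y\<in>M. cinner (x - m) y = 0))" for x
  have Pch: "P x \<in> M \<and> (\<forall>y\<in>M. cinner (x - P x) y = 0)" for x
    unfolding P_def using closest_point_orth[OF sub cl, of x] by (rule someI_ex[OF bexE]) blast
  have PM: "P x \<in> M" for x using Pch by blast
  have Po: "cinner (x - P x) y = 0" if "y \<in> M" for x y using Pch that by blast
  have Pu: "P x = m" if "m \<in> M" "\<forall>y\<in>M. cinner (x - m) y = 0" for x m
    using orth_unique[OF sub PM that(1)] Po that(2) by blast
  have f1: "P (x + y) = P x + P y" for x y
  proof (rule Pu)
    show "P x + P y \<in> M" by (intro csub_add sub PM)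
    show "\<forall>z\<in>M. cinner (x + y - (P x + P y)) z = 0"
    proof
      fix z assume "z \<in> M"
      have e: "x + y - (P x + P y) = (x - P x) + (y - P y)" by simp
      show "cinner (x + y - (P x + P y)) z = 0" unfolding e cinner_add_left
        using Po[OF \<open>z\<in>M\<close>, of x] Po[OF \<open>z\<in>M\<close>, of y] by simp
    qed
  qed
  have f2: "P (scaleC c x) = scaleC c (P x)" for c x
  proof (rule Pu)
    show "scaleC c (P x) \<in> M" by (intro csub_scaleC sub PM)
    show "\<forall>z\<in>M. cinner (scaleC c x - scaleC c (P x)) z = 0"
      using Po by (simp add: scaleC_diff_right[symmetric] cinner_scaleC_left)
  qed
  have orth2: "cinner (P x) (x - P x) = 0" for x
    using Po[OF PM, of x x] cinner_commute[of "P x" "x - P x"] by simp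
  have f3: "norm (P x) \<le> norm x * 1" for x
  proof -
    have "cinner x x = cinner (x - P x) (x - P x) + cinner (x - P x) (P x) + cinner (P x) (x - P x) + cinner (P x) (P x)"
      by (simp add: cinner_diff_left cinner_diff_right)
    also have "\<dots> = cinner (x - P x) (x - P x) + cinner (P x) (P x)"
      using Po[OF PM, of x x] orth2[of x] by simp
    finally have "(norm x)^2 = (norm (x - P x))^2 + (norm (P x))^2"
      unfolding cinner_self of_real_add[symmetric] of_real_eq_iff .
    then have "(norm (P x))^2 \<le> (norm x)^2" by simp
    then have "norm (P x) \<le> norm x" by (meson power2_le_imp_le norm_ge_zero)
    then show ?thesis by simp
  qed
  have bP: "bop P" by (rule bopI[where A=P, OF f1 f2 f3])
  have fixM: "P x = x" if "x \<in> M" for x using Pu[OF that] by simp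
  have idem: "P (P x) = P x" for x using fixM[OF PM] .
  have sa: "cinner (P x) y = cinner x (P y)" for x y
  proof -
    have z1: "cinner (P x) (y - P y) = 0" using cinner_commute[of "P x" "y - P y"] Po[OF PM, of y x] by simp
    have a: "cinner (P x) y = cinner (P x) (P y)" using z1 by (simp add: cinner_diff_right)
    have z2: "cinner (x - P x) (P y) = 0" by (rule Po[OF PM])
    have b: "cinner x (P y) = cinner (P x) (P y)" using z2 by (simp add: cinner_diff_left)
    show ?thesis using a b by simp
  qed
  have "orth_proj P" using bP sa idem by (simp add: orth_proj_def selfadj_def)
  then show ?thesis using PM fixM by blast
qed

lemma cspan_subspace: "csubspace (cspan X)"
  unfolding csubspace_def
proof (intro conjI ballI allI)
  show "0 \<in> cspan X" unfolding cspan_def by (rule CollectI, rule exI[of _ "{}"]) simp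
next
  fix x y assume "x \<in> cspan X" "y \<in> cspan X"
  then obtain F c G d where F: "finite F" "F \<subseteq> X" "x = (\<Sum>v\<in>F. scaleC (c v) v)"
    and G: "finite G" "G \<subseteq> X" "y = (\<Sum>v\<in>G. scaleC (d v) v)" unfolding cspan_def by blast
  define e where "e v = (if v \<in> F then c v else 0) + (if v \<in> G then d v else 0)" for v
  have H: "finite (F \<union> G)" using F G by simp
  have "(\<Sum>v\<in>F \<union> G. scaleC (e v) v) =
      (\<Sum>v\<in>F \<union> G. scaleC (if v \<in> F then c v else 0) v) + (\<Sum>v\<in>F \<union> G. scaleC (if v \<in> G then d v else 0) v)"
    by (simp add: e_def scaleC_add_left sum.distrib)
  also have "(\<Sum>v\<in>F \<union> G. scaleC (if v \<in> F then c v else 0) v) = (\<Sum>v\<in>F \<union> G. if v \<in> F then scaleC (c v) v else 0)"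
    by (rule sum.cong) auto
  also have "\<dots> = (\<Sum>v\<in>(F \<union> G) \<inter> F. scaleC (c v) v)" by (rule sum.inter_restrict[OF H, symmetric])
  also have "(\<Sum>v\<in>F \<union> G. scaleC (if v \<in> G then d v else 0) v) = (\<Sum>v\<in>F \<union> G. if v \<in> G then scaleC (d v) v else 0)"
    by (rule sum.cong) auto
  also have "\<dots> = (\<Sum>v\<in>(F \<union> G) \<inter> G. scaleC (d v) v)" by (rule sum.inter_restrict[OF H, symmetric])
  finally have "(\<Sum>v\<in>F \<union> G. scaleC (e v) v) = x + y"
    using F G by (simp add: Int_absorb1 Int_absorb2 inf_sup_absorb inf.commute)
  then have "finite (F \<union> G) \<and> F \<union> G \<subseteq> X \<and> x + y = (\<Sum>v\<in>F \<union> G. scaleC (e v) v)"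
    using H F(2) G(2) by simp
  then show "x + y \<in> cspan X" unfolding cspan_def by (intro CollectI exI)
next
  fix a x assume "x \<in> cspan X"
  then obtain F c where F: "finite F" "F \<subseteq> X" "x = (\<Sum>v\<in>F. scaleC (c v) v)" unfolding cspan_def by blast
  have "scaleC a x = (\<Sum>v\<in>F. scaleC (a * c v) v)"
    unfolding F(3) by (induction F rule: infinite_finite_induct) (simp_all add: scaleC_add_right scaleC_scaleC)
  then have "finite F \<and> F \<subseteq> X \<and> scaleC a x = (\<Sum>v\<in>F. scaleC (a * c v) v)" using F by simp
  then show "scaleC a x \<in> cspan X" unfolding cspan_def by (intro CollectI exI)
qed

lemma in_cspan: "\<xi> \<in> X \<Longrightarrow> \<xi> \<in> cspan X"
  unfolding cspan_def by (rule CollectI, rule exI[of _ "{\<xi>}"], rule exI[of _ "\<lambda>_. 1"]) (simp add: scaleC_one)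

lemma closure_subspace:
  fixes S :: "'a::complex_inner set"
  assumes "csubspace S" shows "csubspace (closure S)"
  unfolding csubspace_def
proof (intro conjI ballI allI)
  show "0 \<in> closure S" using csub_zero[OF assms] closure_subset by blast
next
  fix x y assume "x \<in> closure S" "y \<in> closure S"
  then obtain f g where f: "\<forall>n. f n \<in> S" "f \<longlonglongrightarrow> x" and g: "\<forall>n. g n \<in> S" "g \<longlonglongrightarrow> y"
    unfolding closure_sequential by blast
  have "\<forall>n. f n + g n \<in> S" using f g csub_add[OF assms] by blast
  moreover have "(\<lambda>n. f n + g n) \<longlonglongrightarrow> x + y" using f g by (intro tendsto_add) auto
  ultimately show "x + y \<in> closure S" unfolding closure_sequential by (intro exI[of _ "\<lambda>n. f n + g n"] conjI)
next
  fix c x assume "x \<in> closure S"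
  then obtain f where f: "\<forall>n. f n \<in> S" "f \<longlonglongrightarrow> x" unfolding closure_sequential by blast
  have "\<forall>n. scaleC c (f n) \<in> S" using f csub_scaleC[OF assms] by blast
  moreover have "(\<lambda>n. scaleC c (f n)) \<longlonglongrightarrow> scaleC c x"
    using bounded_linear.tendsto[OF bounded_linear_scaleC f(2)] .
  ultimately show "scaleC c x \<in> closure S" unfolding closure_sequential by (intro exI[of _ "\<lambda>n. scaleC c (f n)"] conjI)
qed

lemma closed_cspan_subspace: "csubspace (closed_cspan X)"
  unfolding closed_cspan_def by (intro closure_subspace cspan_subspace)

lemma closed_cspan_closed: "closed (closed_cspan X)"
  unfolding closed_cspan_def by simp

lemma cspan_sub: assumes "csubspace M" "X \<subseteq> M" shows "cspan X \<subseteq> M"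
proof
  fix x assume "x \<in> cspan X"
  then obtain F c where F: "finite F" "F \<subseteq> X" "x = (\<Sum>v\<in>F. scaleC (c v) v)" unfolding cspan_def by blast
  have "(\<Sum>v\<in>F. scaleC (c v) v) \<in> M" using F(1,2)
  proof (induction F rule: finite_induct)
    case empty then show ?case using csub_zero[OF assms(1)] by simp
  next
    case (insert a F)
    then show ?case using assms by (simp add: csub_add csub_scaleC subset_iff)
  qed
  then show "x \<in> M" using F(3) by simp
qed

lemma closed_cspan_sub: assumes "csubspace M" "closed M" "X \<subseteq> M" shows "closed_cspan X \<subseteq> M"
  unfolding closed_cspan_def using cspan_sub[OF assms(1,3)] assms(2) by (rule closure_minimal)

lemma fix_subspace: assumes "bop q" shows "csubspace {z. q z = z}" "closed {z. q z = z}"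
proof -
  show "csubspace {z. q z = z}" unfolding csubspace_def
    by (simp add: bop_zero[OF assms] bop_add[OF assms] bop_scaleC[OF assms])
  have "{z. q z = z} = {z. q z - z = 0}" by simp
  also have "closed \<dots>"
    by (intro closed_Collect_eq continuous_on_diff bop_continuous[OF assms] continuous_on_id continuous_on_const)
  finally show "closed {z. q z = z}" .
qed




section \<open>Markov operator facts\<close>

lemma mk_bop: "markov_operator T \<Longrightarrow> bop A \<Longrightarrow> bop (T A)"
  by (simp add: markov_operator_def)

lemma mk_add: "markov_operator T \<Longrightarrow> bop A \<Longrightarrow> bop B \<Longrightarrow> T (\<lambda>x. A x + B x) = (\<lambda>x. T A x + T B x)"
  by (simp add: markov_operator_def)

lemma mk_scaleC: "markov_operator T \<Longrightarrow> bop A \<Longrightarrow> T (\<lambda>x. scaleC c (A x)) = (\<lambda>x. scaleC c (T A x))"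
  by (simp add: markov_operator_def)

lemma mk_diff: assumes T: "markov_operator T" and A: "bop A" and B: "bop B"
  shows "T (\<lambda>x. A x - B x) = (\<lambda>x. T A x - T B x)"
proof -
  have e: "(\<lambda>x. A x - B x) = (\<lambda>x. A x + scaleC (-1) (B x))" by (simp add: scaleC_minus1)
  have "T (\<lambda>x. A x + scaleC (-1) (B x)) = (\<lambda>x. T A x + T (\<lambda>x. scaleC (-1) (B x)) x)"
    by (rule mk_add[OF T A bop_scaleC_op[OF B]])
  also have "T (\<lambda>x. scaleC (-1) (B x)) = (\<lambda>x. scaleC (-1) (T B x))" by (rule mk_scaleC[OF T B])
  finally show ?thesis unfolding e by (simp add: scaleC_minus1)
qed

lemma mk_pos: assumes T: "markov_operator T" and A: "pos_op A" shows "pos_op (T A)"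
proof -
  have cp: "completely_positive T" using T by (simp add: markov_operator_def)
  have bA: "bop A" using A by (rule pos_op_bop)
  have "matrix_pos 1 (\<lambda>i j. A)"
    unfolding matrix_pos_def using bA A by (simp add: pos_op_def)
  then have m: "matrix_pos 1 (\<lambda>i j. T A)" using cp unfolding completely_positive_def by blast
  have "Im (cinner (T A z) z) = 0 \<and> 0 \<le> Re (cinner (T A z) z)" for z
    using m unfolding matrix_pos_def by (auto dest: spec[of _ "\<lambda>_. z"])
  then show ?thesis using mk_bop[OF T bA] by (simp add: pos_op_def)
qed

lemma Tn_bop: assumes "markov_operator T" "bop A" shows "bop ((T ^^ n) A)"
proof (induction n)
  case 0 show ?case using assms(2) by simp
next
  case (Suc n) show ?case unfolding funpow.simps(2) o_apply by (rule mk_bop[OF assms(1) Suc.IH])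
qed

lemma Tn_pos: assumes "markov_operator T" "pos_op A" shows "pos_op ((T ^^ n) A)"
proof (induction n)
  case 0 show ?case using assms(2) by simp
next
  case (Suc n) show ?case unfolding funpow.simps(2) o_apply by (rule mk_pos[OF assms(1) Suc.IH])
qed

lemma Tn_diff: assumes T: "markov_operator T" and A: "bop A" and B: "bop B"
  shows "(T ^^ n) (\<lambda>x. A x - B x) = (\<lambda>x. (T ^^ n) A x - (T ^^ n) B x)"
proof (induction n)
  case 0 then show ?case by simp
next
  case (Suc n)
  then show ?case using mk_diff[OF T Tn_bop[OF T A] Tn_bop[OF T B]] by simp
qed

section \<open>Partial sums\<close>

definition PS :: "(('a::complex_inner \<Rightarrow> 'a) \<Rightarrow> ('a \<Rightarrow> 'a)) \<Rightarrow> ('a \<Rightarrow> 'a) \<Rightarrow> nat \<Rightarrow> 'a \<Rightarrow> 'a" where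
  "PS T x N = (\<lambda>\<eta>. \<Sum>n<N. (T ^^ n) x \<eta>)"

lemma pos_op_sum: assumes "\<And>i. i \<in> F \<Longrightarrow> pos_op (B i)" shows "pos_op (\<lambda>\<eta>. \<Sum>i\<in>F. B i \<eta>)"
proof -
  have "bop (\<lambda>\<eta>. \<Sum>i\<in>F. B i \<eta>)" using assms by (intro bop_sum_op pos_op_bop)
  moreover have "Im (cinner (\<Sum>i\<in>F. B i \<eta>) \<eta>) = 0" for \<eta>
    using assms by (simp add: cinner_sum_left pos_op_def)
  moreover have "0 \<le> Re (cinner (\<Sum>i\<in>F. B i \<eta>) \<eta>)" for \<eta>
    using assms by (simp add: cinner_sum_left pos_op_ge0 sum_nonneg)
  ultimately show ?thesis by (simp add: pos_op_def)
qed

lemma PS_pos: "markov_operator T \<Longrightarrow> pos_op x \<Longrightarrow> pos_op (PS T x N)"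
  unfolding PS_def by (rule pos_op_sum, rule Tn_pos)

lemma PS_mono: assumes "markov_operator T" "pos_op x" "m \<le> N"
  shows "pos_op (\<lambda>\<eta>. PS T x N \<eta> - PS T x m \<eta>)"
proof -
  have "(\<lambda>\<eta>. PS T x N \<eta> - PS T x m \<eta>) = (\<lambda>\<eta>. \<Sum>n\<in>{m..<N}. (T ^^ n) x \<eta>)"
  proof (rule ext)
    fix \<eta>
    show "PS T x N \<eta> - PS T x m \<eta> = (\<Sum>n\<in>{m..<N}. (T ^^ n) x \<eta>)"
      unfolding PS_def using sum_diff_nat_ivl[of 0 m N "\<lambda>n. (T ^^ n) x \<eta>"] assms(3)
      by (simp add: atLeast0LessThan)
  qed
  then show ?thesis using Tn_pos[OF assms(1,2)] by (simp add: pos_op_sum)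
qed

lemma PS_quad: "cinner (PS T x N \<eta>) \<eta> = (\<Sum>n<N. cinner ((T ^^ n) x \<eta>) \<eta>)"
  by (simp add: PS_def cinner_sum_left)

lemma T_summable_PS: "T_summable T x \<longleftrightarrow> pos_op x \<and> (\<exists>S. bop S \<and> (\<forall>\<eta>. (\<lambda>N. PS T x N \<eta>) \<longlonglongrightarrow> S \<eta>))"
  by (simp add: T_summable_def PS_def)

lemma summable_of_bound:
  fixes T :: "('a::chilbert_space \<Rightarrow> 'a) \<Rightarrow> ('a \<Rightarrow> 'a)"
  assumes T: "markov_operator T" and x: "pos_op x"
    and bnd: "\<And>\<eta>. \<exists>M. \<forall>N. Re (cinner (PS T x N \<eta>) \<eta>) \<le> M"
  shows "T_summable T x"
proof -
  have "\<exists>S. bop S \<and> (\<forall>\<eta>. (\<lambda>N. PS T x N \<eta>) \<longlonglongrightarrow> S \<eta>)"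
    by (rule monotone_conv[where A="PS T x", OF PS_pos[OF T x] PS_mono[OF T x] bnd])
  then show ?thesis using x by (simp add: T_summable_PS)
qed




lemma rank_one_self: assumes "norm \<xi> = 1" shows "rank_one \<xi> \<xi> = \<xi>"
  using assms by (simp add: rank_one_def cinner_self scaleC_one)

lemma rank_one_fix: assumes "bop r" "r \<xi> = \<xi>" shows "r (rank_one \<xi> x) = rank_one \<xi> x"
  unfolding rank_one_def using bop_scaleC[OF assms(1)] assms(2) by simp

lemma rank_one_pos: "norm \<xi> = 1 \<Longrightarrow> pos_op (rank_one \<xi>)"
  by (rule proj_pos[OF rank_one_proj])

lemma dir_2_3:
  fixes T :: "('a::chilbert_space \<Rightarrow> 'a) \<Rightarrow> ('a \<Rightarrow> 'a)"
  assumes "T_summable T x"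
  shows "summable (\<lambda>n. cinner ((T ^^ n) x \<eta>) \<eta>)"
proof -
  obtain S where lim: "\<And>\<eta>. (\<lambda>N. PS T x N \<eta>) \<longlonglongrightarrow> S \<eta>" using assms by (auto simp: T_summable_PS)
  have "(\<lambda>N. cinner (PS T x N \<eta>) \<eta>) \<longlonglongrightarrow> cinner (S \<eta>) \<eta>"
    by (rule tendsto_cinner[OF lim tendsto_const])
  then have "(\<lambda>n. cinner ((T ^^ n) x \<eta>) \<eta>) sums cinner (S \<eta>) \<eta>"
    unfolding sums_def PS_quad .
  then show ?thesis by (rule sums_summable)
qed

lemma dir_3_2:
  fixes T :: "('a::chilbert_space \<Rightarrow> 'a) \<Rightarrow> ('a \<Rightarrow> 'a)"
  assumes T: "markov_operator T" and x: "pos_op x"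
    and sm: "\<And>\<eta>. summable (\<lambda>n. cinner ((T ^^ n) x \<eta>) \<eta>)"
  shows "T_summable T x"
proof (rule summable_of_bound[OF T x])
  fix \<eta>
  define f where "f n = Re (cinner ((T ^^ n) x \<eta>) \<eta>)" for n
  have sf: "summable f" using sm[of \<eta>] unfolding f_def summable_complex_iff by blast
  have f0: "0 \<le> f n" for n unfolding f_def by (rule pos_op_ge0[OF Tn_pos[OF T x]])
  have "Re (cinner (PS T x N \<eta>) \<eta>) \<le> suminf f" for N
  proof -
    have "Re (cinner (PS T x N \<eta>) \<eta>) = sum f {..<N}" by (simp add: PS_quad f_def)
    also have "\<dots> \<le> suminf f" by (rule sum_le_suminf[OF sf]) (auto simp: f0)
    finally show ?thesis .
  qed
  then show "\<exists>M. \<forall>N. Re (cinner (PS T x N \<eta>) \<eta>) \<le> M" by blast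
qed

lemma dir_dominated:
  fixes T :: "('a::chilbert_space \<Rightarrow> 'a) \<Rightarrow> ('a \<Rightarrow> 'a)"
  assumes T: "markov_operator T" and r: "orth_proj r" and rs: "T_summable T r"
    and \<xi>: "norm \<xi> = 1" "r \<xi> = \<xi>"
  shows "T_summable T (rank_one \<xi>)"
proof -
  define t where "t = rank_one \<xi>"
  have tp: "orth_proj t" unfolding t_def by (rule rank_one_proj[OF \<xi>(1)])
  have tpos: "pos_op t" by (rule proj_pos[OF tp])
  have rpos: "pos_op r" by (rule proj_pos[OF r])
  have le: "op_le t r" unfolding t_def
    by (rule proj_le_A[OF rank_one_proj[OF \<xi>(1)] r rank_one_fix[OF orth_proj_bop[OF r] \<xi>(2)]])
  then have dpos: "pos_op (\<lambda>x. r x - t x)" by (simp add: op_le_def)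
  obtain S where lim: "\<And>\<eta>. (\<lambda>N. PS T r N \<eta>) \<longlonglongrightarrow> S \<eta>" using rs by (auto simp: T_summable_PS)
  show ?thesis unfolding t_def[symmetric]
  proof (rule summable_of_bound[OF T tpos])
    fix \<eta>
    have trm: "Re (cinner ((T ^^ n) t \<eta>) \<eta>) \<le> Re (cinner ((T ^^ n) r \<eta>) \<eta>)" for n
    proof -
      have "pos_op ((T ^^ n) (\<lambda>x. r x - t x))" by (rule Tn_pos[OF T dpos])
      then have "pos_op (\<lambda>x. (T ^^ n) r x - (T ^^ n) t x)"
        using Tn_diff[OF T orth_proj_bop[OF r] orth_proj_bop[OF tp]] by simp
      then have "0 \<le> Re (cinner ((T ^^ n) r \<eta> - (T ^^ n) t \<eta>) \<eta>)" by (rule pos_op_ge0)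
      then show ?thesis by (simp add: cinner_diff_left)
    qed
    define g where "g N = Re (cinner (PS T r N \<eta>) \<eta>)" for N
    have inc: "incseq g"
    proof (rule monoI)
      fix m N :: nat assume "m \<le> N"
      have "0 \<le> Re (cinner (PS T r N \<eta> - PS T r m \<eta>) \<eta>)"
        using pos_op_ge0[OF PS_mono[OF T rpos \<open>m \<le> N\<close>]] by simp
      then show "g m \<le> g N" by (simp add: g_def cinner_diff_left)
    qed
    have "g \<longlonglongrightarrow> Re (cinner (S \<eta>) \<eta>)"
      unfolding g_def by (intro tendsto_Re tendsto_cinner lim tendsto_const)
    then have gle: "g N \<le> Re (cinner (S \<eta>) \<eta>)" for N by (rule incseq_le[OF inc])
    have "Re (cinner (PS T t N \<eta>) \<eta>) \<le> Re (cinner (S \<eta>) \<eta>)" for N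
    proof -
      have "Re (cinner (PS T t N \<eta>) \<eta>) = (\<Sum>n<N. Re (cinner ((T ^^ n) t \<eta>) \<eta>))" by (simp add: PS_quad)
      also have "\<dots> \<le> (\<Sum>n<N. Re (cinner ((T ^^ n) r \<eta>) \<eta>))" by (rule sum_mono[OF trm])
      also have "\<dots> = g N" by (simp add: g_def PS_quad)
      finally show ?thesis using gle[of N] by linarith
    qed
    then show "\<exists>M. \<forall>N. Re (cinner (PS T t N \<eta>) \<eta>) \<le> M" by blast
  qed
qed

lemma rng_in:
  assumes r: "orth_proj r" and X: "\<And>\<xi>. norm \<xi> = 1 \<Longrightarrow> r \<xi> = \<xi> \<Longrightarrow> \<xi> \<in> X"
  shows "r z \<in> closed_cspan X"
proof (cases "r z = 0")
  case True then show ?thesis using csub_zero[OF closed_cspan_subspace] by simp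
next
  case False
  define y where "y = r z"
  have ny: "norm y > 0" using False by (simp add: y_def)
  define \<xi> where "\<xi> = scaleC (complex_of_real (1 / norm y)) y"
  have "cmod (complex_of_real (1 / norm y)) = 1 / norm y" using ny by (simp only: norm_of_real) simp
  then have n1: "norm \<xi> = 1" using ny unfolding \<xi>_def norm_scaleC by simp
  have ry: "r y = y" by (simp add: y_def orth_proj_idem[OF r])
  have "r \<xi> = \<xi>" unfolding \<xi>_def using bop_scaleC[OF orth_proj_bop[OF r]] ry by simp
  then have "\<xi> \<in> X" using X n1 by blast
  then have "\<xi> \<in> closed_cspan X" unfolding closed_cspan_def using in_cspan closure_subset by blast
  then have "scaleC (complex_of_real (norm y)) \<xi> \<in> closed_cspan X" by (rule csub_scaleC[OF closed_cspan_subspace])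
  moreover have "scaleC (complex_of_real (norm y)) \<xi> = y"
    using ny by (simp add: \<xi>_def scaleC_scaleC flip: of_real_mult) (simp add: scaleC_one)
  ultimately show ?thesis by (simp add: y_def)
qed

lemma i_to_ii:
  fixes T :: "('a::chilbert_space \<Rightarrow> 'a) \<Rightarrow> ('a \<Rightarrow> 'a)"
  assumes T: "markov_operator T" and tr: "transient T p"
  shows "\<exists>X. (\<forall>\<xi>\<in>X. norm \<xi> = 1) \<and> range p \<subseteq> closed_cspan X \<and> (\<forall>\<xi>\<in>X. T_summable T (rank_one \<xi>))"
proof -
  obtain P q where p: "orth_proj p" and Pr: "\<And>r. r \<in> P \<Longrightarrow> orth_proj r \<and> T_summable T r"
    and sup: "proj_sup P q" and pq: "op_le p q"
    using tr unfolding transient_def by blast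
  define X where "X = {\<xi>. norm \<xi> = 1 \<and> (\<exists>r\<in>P. r \<xi> = \<xi>)}"
  have X1: "\<forall>\<xi>\<in>X. norm \<xi> = 1" by (simp add: X_def)
  have Xs: "\<forall>\<xi>\<in>X. T_summable T (rank_one \<xi>)"
  proof
    fix \<xi> assume "\<xi> \<in> X"
    then obtain r where rP: "r \<in> P" and n: "norm \<xi> = 1" and f: "r \<xi> = \<xi>" by (auto simp: X_def)
    have o: "orth_proj r" and s: "T_summable T r" using Pr[OF rP] by auto
    show "T_summable T (rank_one \<xi>)" by (rule dir_dominated[OF T o s n f])
  qed
  obtain qM where qM: "orth_proj qM" "\<And>x. qM x \<in> closed_cspan X" "\<And>x. x \<in> closed_cspan X \<Longrightarrow> qM x = x"
    using proj_exists[OF closed_cspan_subspace closed_cspan_closed, of X] by blast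
  have "op_le r qM" if "r \<in> P" for r
  proof (rule proj_le_A[OF _ qM(1)])
    show "orth_proj r" using Pr[OF that] by blast
    show "qM (r x) = r x" for x
    proof (rule qM(3), rule rng_in[OF \<open>orth_proj r\<close>])
      fix \<xi> :: 'a assume "norm \<xi> = 1" "r \<xi> = \<xi>"
      then show "\<xi> \<in> X" using that by (auto simp: X_def)
    qed
  qed
  then have le: "op_le q qM" using sup qM(1) unfolding proj_sup_def by blast
  have qo: "orth_proj q" using sup by (simp add: proj_sup_def)
  have qq: "qM (q x) = q x" for x by (rule proj_le_B[OF qo qM(1) le])
  have "q (p x) = p x" for x by (rule proj_le_B[OF p qo pq])
  then have "p x \<in> closed_cspan X" for x using qq[of "p x"] qM(2)[of "q (p x)"] by simp
  then have "range p \<subseteq> closed_cspan X" by blast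
  then show ?thesis using X1 Xs by blast
qed

lemma ii_to_i:
  fixes T :: "('a::chilbert_space \<Rightarrow> 'a) \<Rightarrow> ('a \<Rightarrow> 'a)"
  assumes p: "orth_proj p" and X1: "\<forall>\<xi>\<in>X. norm \<xi> = 1" and rp: "range p \<subseteq> closed_cspan X"
    and Xs: "\<forall>\<xi>\<in>X. T_summable T (rank_one \<xi>)"
  shows "transient T p"
proof -
  obtain q where q: "orth_proj q" "\<And>x. q x \<in> closed_cspan X" "\<And>x. x \<in> closed_cspan X \<Longrightarrow> q x = x"
    using proj_exists[OF closed_cspan_subspace closed_cspan_closed, of X] by blast
  have XM: "\<xi> \<in> closed_cspan X" if "\<xi> \<in> X" for \<xi>
    unfolding closed_cspan_def using in_cspan[OF that] closure_subset by blast
  have le1: "op_le (rank_one \<xi>) q" if "\<xi> \<in> X" for \<xi>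
  proof (rule proj_le_A[OF rank_one_proj q(1)])
    show "norm \<xi> = 1" using X1 that by blast
    show "q (rank_one \<xi> x) = rank_one \<xi> x" for x
      unfolding rank_one_def by (rule q(3), rule csub_scaleC[OF closed_cspan_subspace XM[OF that]])
  qed
  have least: "op_le q q'" if q': "orth_proj q'" "\<forall>r\<in>rank_one ` X. op_le r q'" for q'
  proof -
    have "q' \<xi> = \<xi>" if "\<xi> \<in> X" for \<xi>
    proof -
      have n: "norm \<xi> = 1" using X1 that by blast
      have "op_le (rank_one \<xi>) q'" using q'(2) that by blast
      then have "q' (rank_one \<xi> \<xi>) = rank_one \<xi> \<xi>" by (rule proj_le_B[OF rank_one_proj[OF n] q'(1)])
      then show ?thesis by (simp add: rank_one_self[OF n])
    qed
    then have "closed_cspan X \<subseteq> {z. q' z = z}"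
      using fix_subspace[OF orth_proj_bop[OF q'(1)]] by (intro closed_cspan_sub) auto
    then have "q' (q x) = q x" for x using q(2)[of x] by blast
    then show ?thesis by (rule proj_le_A[OF q(1) q'(1)])
  qed
  have sup: "proj_sup (rank_one ` X) q" unfolding proj_sup_def using q(1) le1 least by blast
  have pq: "op_le p q"
  proof (rule proj_le_A[OF p q(1)])
    show "q (p x) = p x" for x using rp by (intro q(3)) blast
  qed
  have "\<forall>r\<in>rank_one ` X. orth_proj r \<and> T_summable T r" using X1 Xs rank_one_proj by blast
  then show ?thesis unfolding transient_def using p sup pq by blast
qed


theorem proposition4p7:
  fixes T :: "('a::chilbert_space \<Rightarrow> 'a) \<Rightarrow> ('a \<Rightarrow> 'a)" and p :: "'a \<Rightarrow> 'a"
  assumes "markov_operator T" and "orth_proj p"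
  shows "(transient T p
          \<longleftrightarrow> (\<exists>X. (\<forall>\<xi>\<in>X. norm \<xi> = 1) \<and> range p \<subseteq> closed_cspan X
                  \<and> (\<forall>\<xi>\<in>X. T_summable T (rank_one \<xi>))))
       \<and> ((\<exists>X. (\<forall>\<xi>\<in>X. norm \<xi> = 1) \<and> range p \<subseteq> closed_cspan X
                  \<and> (\<forall>\<xi>\<in>X. T_summable T (rank_one \<xi>)))
          \<longleftrightarrow> (\<exists>X. (\<forall>\<xi>\<in>X. norm \<xi> = 1) \<and> range p \<subseteq> closed_cspan X
                  \<and> (\<forall>\<xi>\<in>X. \<forall>\<eta>. summable (\<lambda>n. cinner ((T ^^ n) (rank_one \<xi>) \<eta>) \<eta>))))"
proof (intro conjI iffI)
  assume "transient T p"
  then show "\<exists>X. (\<forall>\<xi>\<in>X. norm \<xi> = 1) \<and> range p \<subseteq> closed_cspan X \<and> (\<forall>\<xi>\<in>X. T_summable T (rank_one \<xi>))"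
    by (rule i_to_ii[OF assms(1)])
next
  assume "\<exists>X. (\<forall>\<xi>\<in>X. norm \<xi> = 1) \<and> range p \<subseteq> closed_cspan X \<and> (\<forall>\<xi>\<in>X. T_summable T (rank_one \<xi>))"
  then obtain X where X: "\<forall>\<xi>\<in>X. norm \<xi> = 1" "range p \<subseteq> closed_cspan X" "\<forall>\<xi>\<in>X. T_summable T (rank_one \<xi>)"
    by blast
  show "transient T p" by (rule ii_to_i[OF assms(2) X])
next
  assume "\<exists>X. (\<forall>\<xi>\<in>X. norm \<xi> = 1) \<and> range p \<subseteq> closed_cspan X \<and> (\<forall>\<xi>\<in>X. T_summable T (rank_one \<xi>))"
  then obtain X where X: "\<forall>\<xi>\<in>X. norm \<xi> = 1" "range p \<subseteq> closed_cspan X" "\<forall>\<xi>\<in>X. T_summable T (rank_one \<xi>)"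
    by blast
  have "\<forall>\<xi>\<in>X. \<forall>\<eta>. summable (\<lambda>n. cinner ((T ^^ n) (rank_one \<xi>) \<eta>) \<eta>)"
  proof (intro ballI allI)
    fix \<xi> \<eta> assume "\<xi> \<in> X"
    then have "T_summable T (rank_one \<xi>)" using X(3) by blast
    then show "summable (\<lambda>n. cinner ((T ^^ n) (rank_one \<xi>) \<eta>) \<eta>)" by (rule dir_2_3)
  qed
  then show "\<exists>X. (\<forall>\<xi>\<in>X. norm \<xi> = 1) \<and> range p \<subseteq> closed_cspan X
                  \<and> (\<forall>\<xi>\<in>X. \<forall>\<eta>. summable (\<lambda>n. cinner ((T ^^ n) (rank_one \<xi>) \<eta>) \<eta>))"
    using X(1,2) by blast
next
  assume "\<exists>X. (\<forall>\<xi>\<in>X. norm \<xi> = 1) \<and> range p \<subseteq> closed_cspan X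
                  \<and> (\<forall>\<xi>\<in>X. \<forall>\<eta>. summable (\<lambda>n. cinner ((T ^^ n) (rank_one \<xi>) \<eta>) \<eta>))"
  then obtain X where X: "\<forall>\<xi>\<in>X. norm \<xi> = 1" "range p \<subseteq> closed_cspan X"
      "\<forall>\<xi>\<in>X. \<forall>\<eta>. summable (\<lambda>n. cinner ((T ^^ n) (rank_one \<xi>) \<eta>) \<eta>)"
    by blast
  have "\<forall>\<xi>\<in>X. T_summable T (rank_one \<xi>)"
  proof
    fix \<xi> assume x: "\<xi> \<in> X"
    have n: "norm \<xi> = 1" using X(1) x by blast
    have s: "\<And>\<eta>. summable (\<lambda>n. cinner ((T ^^ n) (rank_one \<xi>) \<eta>) \<eta>)" using X(3) x by blast
    show "T_summable T (rank_one \<xi>)" by (rule dir_3_2[OF assms(1) rank_one_pos[OF n] s])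
  qed
  then show "\<exists>X. (\<forall>\<xi>\<in>X. norm \<xi> = 1) \<and> range p \<subseteq> closed_cspan X \<and> (\<forall>\<xi>\<in>X. T_summable T (rank_one \<xi>))"
    using X(1,2) by blast
qed

end
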